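(* The variety $\mathcal V$ is arithmetical (i.e. congruence permutable and congruence distributive) and regular.
   Context: $\mathcal V$ is the variety of algebras $(L,\vee,\wedge,{}',0,1)$ that are bounded lattices with a complementation $'$ (i.e. $x\vee x'\approx1$, $x\wedge x'\approx0$) satisfying the identities $x\vee y'\approx y'\vee\big((x\vee y')\wedge y\big)$ and $x\wedge y\approx x\wedge\big((x\wedge y)\vee x'\big)$. An algebra is congruence permutable if $\Theta\circ\Phi=\Phi\circ\Theta$ for all congruences $\Theta,\Phi$; congruence distributive if its congruence lattice is distributive; regular if any two congruences having a common class coincide. A variety has such a property if all its members do. *)

theory Defs
  imports Main
begin

record 'a lcalg =
  carrier :: "'a set"
  join :: "'a \<Rightarrow> 'a \<Rightarrow> 'a"
  meet :: "'a \<Rightarrow> 'a \<Rightarrow> 'a"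
  cmpl :: "'a \<Rightarrow> 'a"
  zero :: 'a
  one :: 'a

definition is_algebra :: "'a lcalg \<Rightarrow> bool" where
  "is_algebra L \<longleftrightarrow>
     (\<forall>x\<in>carrier L. \<forall>y\<in>carrier L. join L x y \<in> carrier L \<and> meet L x y \<in> carrier L) \<and>
     (\<forall>x\<in>carrier L. cmpl L x \<in> carrier L) \<and>
     zero L \<in> carrier L \<and> one L \<in> carrier L"

definition bounded_lattice_alg :: "'a lcalg \<Rightarrow> bool" where
  "bounded_lattice_alg L \<longleftrightarrow> is_algebra L \<and>
     (\<forall>x\<in>carrier L. \<forall>y\<in>carrier L. \<forall>z\<in>carrier L.
        join L (join L x y) z = join L x (join L y z) \<and>
        meet L (meet L x y) z = meet L x (meet L y z)) \<and>
     (\<forall>x\<in>carrier L. \<forall>y\<in>carrier L.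
        join L x y = join L y x \<and> meet L x y = meet L y x \<and>
        join L x (meet L x y) = x \<and> meet L x (join L x y) = x) \<and>
     (\<forall>x\<in>carrier L. join L x (zero L) = x \<and> meet L x (one L) = x)"

definition in_V :: "'a lcalg \<Rightarrow> bool" where
  "in_V L \<longleftrightarrow> bounded_lattice_alg L \<and>
     (\<forall>x\<in>carrier L. join L x (cmpl L x) = one L \<and> meet L x (cmpl L x) = zero L) \<and>
     (\<forall>x\<in>carrier L. \<forall>y\<in>carrier L.
        join L x (cmpl L y) = join L (cmpl L y) (meet L (join L x (cmpl L y)) y) \<and>
        meet L x y = meet L x (join L (meet L x y) (cmpl L x)))"

definition congruence :: "'a lcalg \<Rightarrow> 'a rel \<Rightarrow> bool" where
  "congruence L \<Theta> \<longleftrightarrow> equiv (carrier L) \<Theta> \<and>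
     (\<forall>x y u v. (x, y) \<in> \<Theta> \<longrightarrow> (u, v) \<in> \<Theta> \<longrightarrow>
        (join L x u, join L y v) \<in> \<Theta> \<and> (meet L x u, meet L y v) \<in> \<Theta>) \<and>
     (\<forall>x y. (x, y) \<in> \<Theta> \<longrightarrow> (cmpl L x, cmpl L y) \<in> \<Theta>)"

definition cong_join :: "'a lcalg \<Rightarrow> 'a rel \<Rightarrow> 'a rel \<Rightarrow> 'a rel" where
  "cong_join L \<Theta> \<Phi> = \<Inter> {\<Psi>. congruence L \<Psi> \<and> \<Theta> \<union> \<Phi> \<subseteq> \<Psi>}"

definition cong_permutable :: "'a lcalg \<Rightarrow> bool" where
  "cong_permutable L \<longleftrightarrow>
     (\<forall>\<Theta> \<Phi>. congruence L \<Theta> \<longrightarrow> congruence L \<Phi> \<longrightarrow> \<Theta> O \<Phi> = \<Phi> O \<Theta>)"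

definition cong_distributive :: "'a lcalg \<Rightarrow> bool" where
  "cong_distributive L \<longleftrightarrow>
     (\<forall>\<Theta> \<Phi> \<Psi>. congruence L \<Theta> \<longrightarrow> congruence L \<Phi> \<longrightarrow> congruence L \<Psi> \<longrightarrow>
        \<Theta> \<inter> cong_join L \<Phi> \<Psi> = cong_join L (\<Theta> \<inter> \<Phi>) (\<Theta> \<inter> \<Psi>))"

definition cong_regular :: "'a lcalg \<Rightarrow> bool" where
  "cong_regular L \<longleftrightarrow>
     (\<forall>\<Theta> \<Phi>. congruence L \<Theta> \<longrightarrow> congruence L \<Phi> \<longrightarrow>
        (\<exists>a\<in>carrier L. \<Theta> `` {a} = \<Phi> `` {a}) \<longrightarrow> \<Theta> = \<Phi>)"

end

theory Submission
  imports Defs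
begin

definition dd :: "'a lcalg \<Rightarrow> 'a \<Rightarrow> 'a \<Rightarrow> 'a" where
  "dd L x y = join L (meet L x y) (cmpl L (join L x y))"
definition pp :: "'a lcalg \<Rightarrow> 'a \<Rightarrow> 'a \<Rightarrow> 'a \<Rightarrow> 'a" where
  "pp L x y z = join L (meet L x (dd L y z)) (meet L z (dd L x y))"
definition mm :: "'a lcalg \<Rightarrow> 'a \<Rightarrow> 'a \<Rightarrow> 'a \<Rightarrow> 'a" where
  "mm L x y z = join L (join L (meet L x y) (meet L y z)) (meet L z x)"

context
  fixes L :: "'a lcalg"
  assumes V: "in_V L"
begin

private abbreviation "C \<equiv> carrier L"
private abbreviation "J \<equiv> join L"
private abbreviation "M \<equiv> meet L"
private abbreviation "N \<equiv> cmpl L"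

lemma clJ: "x \<in> C \<Longrightarrow> y \<in> C \<Longrightarrow> J x y \<in> C"
  using V unfolding in_V_def bounded_lattice_alg_def is_algebra_def by blast
lemma clM: "x \<in> C \<Longrightarrow> y \<in> C \<Longrightarrow> M x y \<in> C"
  using V unfolding in_V_def bounded_lattice_alg_def is_algebra_def by blast
lemma clN: "x \<in> C \<Longrightarrow> N x \<in> C"
  using V unfolding in_V_def bounded_lattice_alg_def is_algebra_def by blast
lemma cl0: "zero L \<in> C"
  using V unfolding in_V_def bounded_lattice_alg_def is_algebra_def by blast
lemma cl1: "one L \<in> C"
  using V unfolding in_V_def bounded_lattice_alg_def is_algebra_def by blast

lemma jA: "x \<in> C \<Longrightarrow> y \<in> C \<Longrightarrow> z \<in> C \<Longrightarrow> J (J x y) z = J x (J y z)"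
  using V unfolding in_V_def bounded_lattice_alg_def by blast
lemma mA: "x \<in> C \<Longrightarrow> y \<in> C \<Longrightarrow> z \<in> C \<Longrightarrow> M (M x y) z = M x (M y z)"
  using V unfolding in_V_def bounded_lattice_alg_def by blast
lemma jC: "x \<in> C \<Longrightarrow> y \<in> C \<Longrightarrow> J x y = J y x"
  using V unfolding in_V_def bounded_lattice_alg_def by blast
lemma mC: "x \<in> C \<Longrightarrow> y \<in> C \<Longrightarrow> M x y = M y x"
  using V unfolding in_V_def bounded_lattice_alg_def by blast
lemma jAb: "x \<in> C \<Longrightarrow> y \<in> C \<Longrightarrow> J x (M x y) = x"
  using V unfolding in_V_def bounded_lattice_alg_def by blast
lemma mAb: "x \<in> C \<Longrightarrow> y \<in> C \<Longrightarrow> M x (J x y) = x"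
  using V unfolding in_V_def bounded_lattice_alg_def by blast
lemma j0: "x \<in> C \<Longrightarrow> J x (zero L) = x"
  using V unfolding in_V_def bounded_lattice_alg_def by blast
lemma m1: "x \<in> C \<Longrightarrow> M x (one L) = x"
  using V unfolding in_V_def bounded_lattice_alg_def by blast
lemma jN: "x \<in> C \<Longrightarrow> J x (N x) = one L"
  using V unfolding in_V_def by blast
lemma mN: "x \<in> C \<Longrightarrow> M x (N x) = zero L"
  using V unfolding in_V_def by blast
lemma axB: "x \<in> C \<Longrightarrow> y \<in> C \<Longrightarrow> M x y = M x (J (M x y) (N x))"
  using V unfolding in_V_def by blast

lemma mI: "x \<in> C \<Longrightarrow> M x x = x"
proof -
  assume x: "x \<in> C"
  have "M x (J x (M x x)) = x" using mAb[OF x clM[OF x x]] .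
  then show ?thesis by (simp add: jAb x)
qed
lemma jI: "x \<in> C \<Longrightarrow> J x x = x"
proof -
  assume x: "x \<in> C"
  have "J x (M x (J x x)) = x" using jAb[OF x clJ[OF x x]] .
  then show ?thesis by (simp add: mAb x)
qed
lemma N1: "N (one L) = zero L"
proof -
  have "N (one L) = M (N (one L)) (one L)" using m1[OF clN[OF cl1]] by simp
  also have "\<dots> = M (one L) (N (one L))" using mC[OF clN[OF cl1] cl1] .
  also have "\<dots> = zero L" using mN[OF cl1] .
  finally show ?thesis .
qed
lemma m0: "x \<in> C \<Longrightarrow> M x (zero L) = zero L"
proof -
  assume x: "x \<in> C"
  have "M x (zero L) = M x (M x (N x))" by (simp add: mN x)
  also have "\<dots> = M (M x x) (N x)" using mA[OF x x clN[OF x]] by simp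
  also have "\<dots> = zero L" by (simp add: mI mN x)
  finally show ?thesis .
qed

lemma absorb2: "x \<in> C \<Longrightarrow> y \<in> C \<Longrightarrow> M (M x y) (J x y) = M x y"
proof -
  assume x: "x \<in> C" and y: "y \<in> C"
  have "M (M x y) (J x y) = M (M y x) (J x y)" by (simp add: mC x y)
  also have "\<dots> = M y (M x (J x y))" using mA[OF y x clJ[OF x y]] .
  also have "\<dots> = M x y" by (simp add: mAb mC x y)
  finally show ?thesis .
qed

abbreviation "d \<equiv> dd L"

lemma cld: "x \<in> C \<Longrightarrow> y \<in> C \<Longrightarrow> d x y \<in> C"
  unfolding dd_def by (simp add: clJ clM clN)

lemma keyB: "x \<in> C \<Longrightarrow> y \<in> C \<Longrightarrow> M (J x y) (d x y) = M x y"
proof -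
  assume x: "x \<in> C" and y: "y \<in> C"
  have "M (J x y) (M x y) = M x y" using absorb2[OF x y] by (simp add: mC clM clJ x y)
  then show ?thesis using axB[of "J x y" "M x y"] unfolding dd_def
    by (simp add: clJ clM x y)
qed

lemma keyK: "x \<in> C \<Longrightarrow> y \<in> C \<Longrightarrow> M x (d x y) = M x y"
proof -
  assume x: "x \<in> C" and y: "y \<in> C"
  have "M x (d x y) = M (M x (J x y)) (d x y)" by (simp add: mAb x y)
  also have "\<dots> = M x (M (J x y) (d x y))" by (simp add: mA x y clJ cld)
  also have "\<dots> = M x (M x y)" by (simp add: keyB x y)
  also have "\<dots> = M x y" using mA[OF x x y] by (simp add: mI x)
  finally show ?thesis .
qed

lemma jAb2: "x \<in> C \<Longrightarrow> y \<in> C \<Longrightarrow> J y (M x y) = y"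
  using jAb[of y x] by (simp add: mC)
lemma keyK2: "x \<in> C \<Longrightarrow> y \<in> C \<Longrightarrow> M y (dd L x y) = M x y"
  using keyK[of y x] unfolding dd_def by (simp add: mC jC)

lemma dC: "x \<in> C \<Longrightarrow> y \<in> C \<Longrightarrow> d x y = d y x"
  unfolding dd_def by (simp add: mC jC)

lemma dI: "x \<in> C \<Longrightarrow> d x x = one L"
  unfolding dd_def by (simp add: mI jI jN)


abbreviation "p \<equiv> pp L"

abbreviation "m \<equiv> mm L"

lemma p1: "x \<in> C \<Longrightarrow> y \<in> C \<Longrightarrow> p x y y = x"
  unfolding pp_def by (simp add: dI m1 keyK2 jAb)

lemma p2: "x \<in> C \<Longrightarrow> y \<in> C \<Longrightarrow> p x x y = y"
  unfolding pp_def by (simp add: dI m1 keyK jC clM jAb2)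

lemma mj1: "x \<in> C \<Longrightarrow> y \<in> C \<Longrightarrow> m x x y = x"
  unfolding mm_def by (simp add: mI jAb mC)

lemma mj2: "x \<in> C \<Longrightarrow> y \<in> C \<Longrightarrow> m x y x = x"
  unfolding mm_def by (simp add: mI jAb jC mC clM jI)

lemma mj3: "x \<in> C \<Longrightarrow> y \<in> C \<Longrightarrow> m x y y = y"
  unfolding mm_def by (simp add: mI jAb2 jAb jC mC clM)

end

lemma cong_sub: "congruence L T \<Longrightarrow> (x,y) \<in> T \<Longrightarrow> x \<in> carrier L \<and> y \<in> carrier L"
  unfolding congruence_def equiv_def by blast
lemma cong_refl: "congruence L T \<Longrightarrow> x \<in> carrier L \<Longrightarrow> (x,x) \<in> T"
  unfolding congruence_def equiv_def refl_on_def by blast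
lemma cong_sym: "congruence L T \<Longrightarrow> (x,y) \<in> T \<Longrightarrow> (y,x) \<in> T"
  unfolding congruence_def equiv_def sym_def by blast
lemma cong_trans: "congruence L T \<Longrightarrow> (x,y) \<in> T \<Longrightarrow> (y,z) \<in> T \<Longrightarrow> (x,z) \<in> T"
  unfolding congruence_def equiv_def trans_def by blast
lemma cong_J: "congruence L T \<Longrightarrow> (x,y) \<in> T \<Longrightarrow> (u,v) \<in> T \<Longrightarrow> (join L x u, join L y v) \<in> T"
  unfolding congruence_def by blast
lemma cong_M: "congruence L T \<Longrightarrow> (x,y) \<in> T \<Longrightarrow> (u,v) \<in> T \<Longrightarrow> (meet L x u, meet L y v) \<in> T"
  unfolding congruence_def by blast
lemma cong_N: "congruence L T \<Longrightarrow> (x,y) \<in> T \<Longrightarrow> (cmpl L x, cmpl L y) \<in> T"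
  unfolding congruence_def by blast

lemma cong_d: "congruence L T \<Longrightarrow> (x,x') \<in> T \<Longrightarrow> (y,y') \<in> T \<Longrightarrow> (dd L x y, dd L x' y') \<in> T"
  unfolding dd_def by (intro cong_J cong_M cong_N) auto
lemma cong_p: "congruence L T \<Longrightarrow> (x,x') \<in> T \<Longrightarrow> (y,y') \<in> T \<Longrightarrow> (z,z') \<in> T \<Longrightarrow> (pp L x y z, pp L x' y' z') \<in> T"
  unfolding pp_def by (intro cong_J cong_M cong_d) auto
lemma cong_m: "congruence L T \<Longrightarrow> (x,x') \<in> T \<Longrightarrow> (y,y') \<in> T \<Longrightarrow> (z,z') \<in> T \<Longrightarrow> (mm L x y z, mm L x' y' z') \<in> T"
  unfolding mm_def by (intro cong_J cong_M) auto


lemma perm_sub: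
  assumes V: "in_V L" and T: "congruence L T" and F: "congruence L F"
  shows "T O F \<subseteq> F O T"
proof
  fix q assume "q \<in> T O F"
  then obtain a b z where q: "q = (a,b)" and az: "(a,z) \<in> T" and zb: "(z,b) \<in> F" by blast
  have a: "a \<in> carrier L" and z: "z \<in> carrier L" using cong_sub[OF T az] by auto
  have b: "b \<in> carrier L" using cong_sub[OF F zb] by auto
  have "(pp L a z b, pp L a b b) \<in> F"
    by (rule cong_p[OF F cong_refl[OF F a] zb cong_refl[OF F b]])
  then have 1: "(a, pp L a z b) \<in> F" using p1[OF V a b] cong_sym[OF F] by simp
  have "(pp L a z b, pp L z z b) \<in> T"
    by (rule cong_p[OF T az cong_refl[OF T z] cong_refl[OF T b]])
  then have 2: "(pp L a z b, b) \<in> T" using p2[OF V z b] by simp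
  show "q \<in> F O T" using 1 2 q by blast
qed

lemma perm_eq:
  assumes V: "in_V L" and T: "congruence L T" and F: "congruence L F"
  shows "T O F = F O T"
  using perm_sub[OF V T F] perm_sub[OF V F T] by blast

lemma comp_cong:
  assumes V: "in_V L" and T: "congruence L T" and F: "congruence L F"
  shows "congruence L (T O F)"
  unfolding congruence_def equiv_def
proof (intro conjI allI impI)
  show "T O F \<subseteq> carrier L \<times> carrier L"
    using cong_sub[OF T] cong_sub[OF F] by blast
  show "refl_on (carrier L) (T O F)"
    unfolding refl_on_def using cong_refl[OF T] cong_refl[OF F] by blast
  show "sym (T O F)"
  proof (rule symI)
    fix a b assume "(a,b) \<in> T O F"
    then have "(b,a) \<in> F O T" using cong_sym[OF T] cong_sym[OF F] by blast
    then show "(b,a) \<in> T O F" using perm_eq[OF V T F] by simp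
  qed
  show "trans (T O F)"
  proof (rule transI)
    fix a b c assume "(a,b) \<in> T O F" "(b,c) \<in> T O F"
    then obtain u v where au: "(a,u) \<in> T" and ub: "(u,b) \<in> F" and bv: "(b,v) \<in> T" and vc: "(v,c) \<in> F"
      by blast
    have "(u,v) \<in> F O T" using ub bv by blast
    then have "(u,v) \<in> T O F" using perm_eq[OF V T F] by simp
    then obtain w where "(u,w) \<in> T" "(w,v) \<in> F" by blast
    then have "(a,w) \<in> T" "(w,c) \<in> F" using au vc cong_trans[OF T] cong_trans[OF F] by blast+
    then show "(a,c) \<in> T O F" by blast
  qed
  fix x y u v assume "(x,y) \<in> T O F" "(u,v) \<in> T O F"
  then obtain a b where "(x,a) \<in> T" "(a,y) \<in> F" "(u,b) \<in> T" "(b,v) \<in> F" by blast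
  then have "(join L x u, join L a b) \<in> T" "(join L a b, join L y v) \<in> F"
    using cong_J[OF T] cong_J[OF F] by blast+
  then show "(join L x u, join L y v) \<in> T O F" by blast
next
  fix x y u v assume "(x,y) \<in> T O F" "(u,v) \<in> T O F"
  then obtain a b where "(x,a) \<in> T" "(a,y) \<in> F" "(u,b) \<in> T" "(b,v) \<in> F" by blast
  then have "(meet L x u, meet L a b) \<in> T" "(meet L a b, meet L y v) \<in> F"
    using cong_M[OF T] cong_M[OF F] by blast+
  then show "(meet L x u, meet L y v) \<in> T O F" by blast
next
  fix x y assume "(x,y) \<in> T O F"
  then obtain a where "(x,a) \<in> T" "(a,y) \<in> F" by blast
  then have "(cmpl L x, cmpl L a) \<in> T" "(cmpl L a, cmpl L y) \<in> F"
    using cong_N[OF T] cong_N[OF F] by blast+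
  then show "(cmpl L x, cmpl L y) \<in> T O F" by blast
qed

lemma join_eq:
  assumes V: "in_V L" and T: "congruence L T" and F: "congruence L F"
  shows "cong_join L T F = T O F"
proof
  show "cong_join L T F \<subseteq> T O F"
    unfolding cong_join_def
  proof (rule Inter_lower, intro CollectI conjI)
    show "congruence L (T O F)" by (rule comp_cong[OF V T F])
    show "T \<union> F \<subseteq> T O F"
    proof
      fix q assume q: "q \<in> T \<union> F"
      obtain a b where qab: "q = (a,b)" by fastforce
      show "q \<in> T O F"
      proof (cases "q \<in> T")
        case True
        then have "b \<in> carrier L" using cong_sub[OF T] qab by blast
        then have "(b,b) \<in> F" using cong_refl[OF F] by blast
        then show ?thesis using True qab by blast
      next
        case False
        then have "q \<in> F" using q by blast
        then have "a \<in> carrier L" using cong_sub[OF F] qab by blast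
        then have "(a,a) \<in> T" using cong_refl[OF T] by blast
        then show ?thesis using \<open>q \<in> F\<close> qab by blast
      qed
    qed
  qed
  show "T O F \<subseteq> cong_join L T F"
    unfolding cong_join_def
  proof (rule Inter_greatest)
    fix P assume "P \<in> {\<Psi>. congruence L \<Psi> \<and> T \<union> F \<subseteq> \<Psi>}"
    then have P: "congruence L P" and sub: "T \<union> F \<subseteq> P" by auto
    show "T O F \<subseteq> P"
    proof
      fix q assume "q \<in> T O F"
      then obtain a b c where "q = (a,c)" "(a,b) \<in> P" "(b,c) \<in> P" using sub by blast
      then show "q \<in> P" using cong_trans[OF P] by blast
    qed
  qed
qed

lemma int_cong:
  assumes T: "congruence L T" and F: "congruence L F"
  shows "congruence L (T \<inter> F)"
proof -
  have "equiv (carrier L) (T \<inter> F)"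
  proof (rule equivI)
    show "T \<inter> F \<subseteq> carrier L \<times> carrier L"
    proof
      fix q assume "q \<in> T \<inter> F"
      moreover obtain a b where "q = (a,b)" by fastforce
      ultimately show "q \<in> carrier L \<times> carrier L" using cong_sub[OF T, of a b] by simp
    qed
    show "refl_on (carrier L) (T \<inter> F)" unfolding refl_on_def using cong_refl[OF T] cong_refl[OF F] by blast
    show "sym (T \<inter> F)" by (rule symI) (use cong_sym[OF T] cong_sym[OF F] in blast)
    show "trans (T \<inter> F)" by (rule transI) (use cong_trans[OF T] cong_trans[OF F] in blast)
  qed
  moreover have "\<forall>x y u v. (x, y) \<in> T \<inter> F \<longrightarrow> (u, v) \<in> T \<inter> F \<longrightarrow>
        (join L x u, join L y v) \<in> T \<inter> F \<and> (meet L x u, meet L y v) \<in> T \<inter> F"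
    using cong_J[OF T] cong_J[OF F] cong_M[OF T] cong_M[OF F] by blast
  moreover have "\<forall>x y. (x, y) \<in> T \<inter> F \<longrightarrow> (cmpl L x, cmpl L y) \<in> T \<inter> F"
    using cong_N[OF T] cong_N[OF F] by blast
  ultimately show ?thesis unfolding congruence_def by blast
qed

lemma distrib:
  assumes V: "in_V L" and T: "congruence L T" and F: "congruence L F" and G: "congruence L G"
  shows "T \<inter> cong_join L F G = cong_join L (T \<inter> F) (T \<inter> G)"
proof -
  have e1: "cong_join L F G = F O G" by (rule join_eq[OF V F G])
  have e2: "cong_join L (T \<inter> F) (T \<inter> G) = (T \<inter> F) O (T \<inter> G)"
    by (rule join_eq[OF V int_cong[OF T F] int_cong[OF T G]])
  have "T \<inter> (F O G) \<subseteq> (T \<inter> F) O (T \<inter> G)"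
  proof
    fix q assume "q \<in> T \<inter> (F O G)"
    then obtain x y c where q: "q = (x,y)" and xy: "(x,y) \<in> T" and xc: "(x,c) \<in> F" and cy: "(c,y) \<in> G"
      by blast
    have x: "x \<in> carrier L" and y: "y \<in> carrier L" using cong_sub[OF T xy] by auto
    have c: "c \<in> carrier L" using cong_sub[OF G cy] by auto
    let ?w = "mm L x c y"
    have "(?w, mm L x x y) \<in> F"
      by (rule cong_m[OF F cong_refl[OF F x] cong_sym[OF F xc] cong_refl[OF F y]])
    then have 1: "(x, ?w) \<in> F" using mj1[OF V x y] cong_sym[OF F] by simp
    have "(?w, mm L x c x) \<in> T"
      by (rule cong_m[OF T cong_refl[OF T x] cong_refl[OF T c] cong_sym[OF T xy]])
    then have 2: "(x, ?w) \<in> T" using mj2[OF V x c] cong_sym[OF T] by simp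
    have "(?w, mm L x y y) \<in> G"
      by (rule cong_m[OF G cong_refl[OF G x] cy cong_refl[OF G y]])
    then have 3: "(?w, y) \<in> G" using mj3[OF V x y] by simp
    have "(?w, mm L y c y) \<in> T"
      by (rule cong_m[OF T xy cong_refl[OF T c] cong_refl[OF T y]])
    then have 4: "(?w, y) \<in> T" using mj2[OF V y c] by simp
    show "q \<in> (T \<inter> F) O (T \<inter> G)" using 1 2 3 4 q by blast
  qed
  moreover have "(T \<inter> F) O (T \<inter> G) \<subseteq> T \<inter> (F O G)"
    using cong_trans[OF T] by blast
  ultimately show ?thesis using e1 e2 by blast
qed


lemma reg_sub:
  assumes V: "in_V L" and T: "congruence L T" and F: "congruence L F"
    and a: "a \<in> carrier L" and cls: "T `` {a} = F `` {a}"
  shows "T \<subseteq> F"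
proof
  fix q assume "q \<in> T"
  moreover obtain x y where q: "q = (x,y)" by fastforce
  ultimately have xy: "(x,y) \<in> T" by simp
  have x: "x \<in> carrier L" and y: "y \<in> carrier L" using cong_sub[OF T xy] by auto
  define u where "u = dd L x y"
  have u: "u \<in> carrier L" unfolding u_def by (rule cld[OF V x y])
  define v where "v = cmpl L u"
  have v: "v \<in> carrier L" unfolding v_def by (rule clN[OF V u])
  have "(dd L x y, dd L x x) \<in> T"
    by (rule cong_d[OF T cong_refl[OF T x] cong_sym[OF T xy]])
  then have u1T: "(u, one L) \<in> T" using dI[OF V x] u_def by simp
  have "(meet L a u, meet L a (one L)) \<in> T" by (rule cong_M[OF T cong_refl[OF T a] u1T])
  then have "(a, meet L a u) \<in> T" using m1[OF V a] cong_sym[OF T] by simp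
  then have "meet L a u \<in> F `` {a}" using cls by blast
  then have amF: "(a, meet L a u) \<in> F" by blast
  have "(join L a v, join L a (cmpl L (one L))) \<in> T"
    unfolding v_def by (rule cong_J[OF T cong_refl[OF T a] cong_N[OF T u1T]])
  then have "(a, join L a v) \<in> T" using N1[OF V] j0[OF V a] cong_sym[OF T] by simp
  then have "join L a v \<in> F `` {a}" using cls by blast
  then have ajF: "(a, join L a v) \<in> F" by blast
  have "(meet L v (join L a v), meet L v a) \<in> F"
    by (rule cong_M[OF F cong_refl[OF F v] cong_sym[OF F ajF]])
  moreover have "meet L v (join L a v) = v" using jC[OF V a v] mAb[OF V v a] by simp
  ultimately have f1: "(v, meet L v a) \<in> F" by simp
  have f2: "(meet L v a, meet L v (meet L a u)) \<in> F"
    by (rule cong_M[OF F cong_refl[OF F v] amF])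
  have "meet L v (meet L a u) = meet L v (meet L u a)" using mC[OF V a u] by simp
  also have "\<dots> = meet L (meet L v u) a" using mA[OF V v u a] by simp
  also have "\<dots> = meet L (meet L u v) a" using mC[OF V u v] by simp
  also have "\<dots> = zero L" using mN[OF V u] v_def mC[OF V cl0[OF V] a] m0[OF V a] by simp
  finally have "(v, zero L) \<in> F" using f1 f2 cong_trans[OF F] by metis
  then have "(join L u v, join L u (zero L)) \<in> F" by (rule cong_J[OF F cong_refl[OF F u]])
  then have u1F: "(u, one L) \<in> F" using jN[OF V u] j0[OF V u] v_def cong_sym[OF F] by simp
  have "(meet L (join L x y) u, meet L (join L x y) (one L)) \<in> F"
    by (rule cong_M[OF F cong_refl[OF F clJ[OF V x y]] u1F])
  then have acF: "(meet L x y, join L x y) \<in> F"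
    using keyB[OF V x y] m1[OF V clJ[OF V x y]] u_def by simp
  have "(meet L x (join L x y), meet L x (meet L x y)) \<in> F"
    by (rule cong_M[OF F cong_refl[OF F x] cong_sym[OF F acF]])
  moreover have "meet L x (meet L x y) = meet L x y" using mA[OF V x x y] mI[OF V x] by simp
  ultimately have xF: "(x, meet L x y) \<in> F" using mAb[OF V x y] by simp
  have "(meet L y (join L x y), meet L y (meet L x y)) \<in> F"
    by (rule cong_M[OF F cong_refl[OF F y] cong_sym[OF F acF]])
  moreover have "meet L y (meet L x y) = meet L x y"
    using mC[OF V x y] mA[OF V y y x] mI[OF V y] by simp
  moreover have "meet L y (join L x y) = y" using jC[OF V x y] mAb[OF V y x] by simp
  ultimately have yF: "(y, meet L x y) \<in> F" by simp
  show "q \<in> F" using q xF yF cong_sym[OF F] cong_trans[OF F] by metis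
qed

theorem theorem2:
  fixes L :: "'a lcalg"
  assumes "in_V L"
  shows "cong_permutable L \<and> cong_distributive L \<and> cong_regular L"
proof (intro conjI)
  show "cong_permutable L" unfolding cong_permutable_def using perm_eq[OF assms] by blast
  show "cong_distributive L" unfolding cong_distributive_def using distrib[OF assms] by blast
  show "cong_regular L" unfolding cong_regular_def
  proof (intro allI impI)
    fix T F assume T: "congruence L T" and F: "congruence L F"
      and "\<exists>a\<in>carrier L. T `` {a} = F `` {a}"
    then obtain a where a: "a \<in> carrier L" and e: "T `` {a} = F `` {a}" by blast
    show "T = F" using reg_sub[OF assms T F a e] reg_sub[OF assms F T a e[symmetric]] by blast
  qed
qed

end
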